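(* For fixed $0<q<1$, $p=1-q$, integers $r\ge1$ and $n\ge r$, \[ E^{(r)}_n=(-1)^r\Big(\frac pq\Big)^{r-1}\sum_{k=r}^n\binom nk(-1)^k\frac{\phi_r(k)}{(1-q^k)^2}, \] where, with $Q=1/q$, \[ \phi_r(k)=\sum_{0<l_1<\dots<l_{r-1}<k}\frac{1}{Q^{l_1}-1}\cdots\frac{1}{Q^{l_{r-1}}-1}\,\big(q^{l_{r-1}}-q^k\big), \] with the convention that for $r=1$ the sum consists of the single empty-index term with $l_0=0$, i.e. $\phi_1(k)=1-q^k$. In particular \[ E^{(1)}_n=\sum_{k=1}^n\binom nk(-1)^{k-1}\frac{1}{1-q^k}. \]
   Context: Words $a_1\dots a_n$ have independent letters with $\mathbb P\{a_i=k\}=pq^{k-1}$, $k\ge1$. An index $i$ is a left-to-right maximum if $a_i>a_j$ for all $j<i$. Left-to-right maxima are counted from the right (the last one is the 1st). $E^{(r)}_n=\mathbb E[V\cdot\mathbf 1\{\text{at least } r \text{ left-to-right maxima}\}]$ where $V$ is the value of the $r$th left-to-right maximum from the right. *)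

theory Defs
  imports "HOL-Probability.Probability"
begin

text \<open>A single letter: value k \<ge> 1 with probability p q^(k-1), where p = 1 - q.
  (geometric_pmf p gives j \<ge> 0 with probability (1-p)^j p, so the letter is Suc of it.)\<close>
definition letter_pmf :: "real \<Rightarrow> nat pmf" where
  "letter_pmf q = map_pmf Suc (geometric_pmf (1 - q))"

text \<open>Random word a_0 ... a_(n-1) (0-based positions) with independent letters;
  positions outside {..<n} carry the dummy value 0.\<close>
definition word_pmf :: "real \<Rightarrow> nat \<Rightarrow> (nat \<Rightarrow> nat) pmf" where
  "word_pmf q n = Pi_pmf {..<n} 0 (\<lambda>_. letter_pmf q)"

definition ltr_max_pos :: "nat \<Rightarrow> (nat \<Rightarrow> nat) \<Rightarrow> nat set" where
  "ltr_max_pos n a = {i. i < n \<and> (\<forall>j<i. a j < a i)}"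

text \<open>Value of the r-th left-to-right maximum counted from the right (r \<ge> 1):
  the last one is the 1st.\<close>
definition rth_ltr_max_value :: "nat \<Rightarrow> nat \<Rightarrow> (nat \<Rightarrow> nat) \<Rightarrow> nat" where
  "rth_ltr_max_value r n a = a (rev (sorted_list_of_set (ltr_max_pos n a)) ! (r - 1))"

definition E_rn :: "real \<Rightarrow> nat \<Rightarrow> nat \<Rightarrow> real" where
  "E_rn q r n = measure_pmf.expectation (word_pmf q n)
     (\<lambda>a. if card (ltr_max_pos n a) \<ge> r then real (rth_ltr_max_value r n a) else 0)"

text \<open>phi_r(k): sum over 0 < l_1 < ... < l_(r-1) < k, i.e. over subsets L of {1..<k}
  of size r-1; l_(r-1) = max L, with the convention l_0 = 0 when L is empty.
  Q = 1/q.\<close>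
definition phi :: "real \<Rightarrow> nat \<Rightarrow> nat \<Rightarrow> real" where
  "phi q r k = (\<Sum>L\<in>{L. L \<subseteq> {1..<k} \<and> card L = r - 1}.
      (\<Prod>l\<in>L. 1 / ((1 / q) ^ l - 1)) * (q ^ (if L = {} then 0 else Max L) - q ^ k))"

end

theory Submission
  imports Defs
begin

definition ww :: "real \<Rightarrow> nat \<Rightarrow> real" where
  "ww q l = 1 / ((1 / q) ^ l - 1)"

definition subs :: "nat \<Rightarrow> nat \<Rightarrow> nat set set" where
  "subs j k = {L. L \<subseteq> {1..<k} \<and> card L = j}"

definition Sg :: "real \<Rightarrow> nat \<Rightarrow> nat \<Rightarrow> real" where
  "Sg q j k = (\<Sum>L\<in>subs j k. \<Prod>l\<in>L. ww q l)"

definition Ag :: "real \<Rightarrow> nat \<Rightarrow> nat \<Rightarrow> real" where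
  "Ag q j k = (\<Sum>L\<in>subs j k. (\<Prod>l\<in>L. ww q l) * q ^ (if L = {} then 0 else Max L))"

lemma finite_subs: "finite (subs j k)"
  unfolding subs_def by (rule finite_subset[of _ "Pow {1..<k}"]) auto

lemma subs0: "subs 0 k = {{}}"
proof -
  have "L = {}" if "L \<subseteq> {1..<k}" "card L = 0" for L
    using that finite_subset[OF that(1)] by auto
  then show ?thesis unfolding subs_def by auto
qed

lemma subs_empty: "j > 0 \<Longrightarrow> subs j 1 = {}"
  unfolding subs_def by auto

lemma subs_Suc:
  assumes "k \<ge> 1"
  shows "subs (Suc j) (Suc k) = subs (Suc j) k \<union> insert k ` subs j k"
proof -
  have e: "{1..<Suc k} = insert k {1..<k}" using assms by auto
  show ?thesis
  proof (intro equalityI subsetI)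
    fix L assume L: "L \<in> subs (Suc j) (Suc k)"
    show "L \<in> subs (Suc j) k \<union> insert k ` subs j k"
    proof (cases "k \<in> L")
      case True
      have "L - {k} \<in> subs j k" using L True unfolding subs_def e
        by (auto simp: card_Diff_singleton)
      moreover have "L = insert k (L - {k})" using True by auto
      ultimately show ?thesis by blast
    next
      case False
      then show ?thesis using L unfolding subs_def e by auto
    qed
  next
    fix L assume "L \<in> subs (Suc j) k \<union> insert k ` subs j k"
    then show "L \<in> subs (Suc j) (Suc k)" unfolding subs_def e
      by (auto simp: finite_subset[of _ "{1..<k}"] subset_iff card_insert_if)
  qed
qed

lemma sum_subs_Suc:
  assumes "k \<ge> 1"
  shows "(\<Sum>L\<in>subs (Suc j) (Suc k). F L) = (\<Sum>L\<in>subs (Suc j) k. F L) + (\<Sum>L\<in>subs j k. F (insert k L))"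
proof -
  have d: "subs (Suc j) k \<inter> insert k ` subs j k = {}" unfolding subs_def by auto
  have i: "inj_on (insert k) (subs j k)"
  proof (rule inj_onI)
    fix x y assume "x \<in> subs j k" "y \<in> subs j k" "insert k x = insert k y"
    moreover have "k \<notin> x" "k \<notin> y" using calculation unfolding subs_def by auto
    ultimately show "x = y" by (metis insert_ident)
  qed
  show ?thesis
    unfolding subs_Suc[OF assms]
    by (subst sum.union_disjoint) (auto simp: finite_subs d sum.reindex[OF i])
qed

lemma Sg0[simp]: "Sg q 0 k = 1" unfolding Sg_def subs0 by simp
lemma Ag0[simp]: "Ag q 0 k = 1" unfolding Ag_def subs0 by simp
lemma Sg1: "j > 0 \<Longrightarrow> Sg q j (Suc 0) = 0" unfolding Sg_def using subs_empty by simp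
lemma Ag1: "j > 0 \<Longrightarrow> Ag q j (Suc 0) = 0" unfolding Ag_def using subs_empty by simp

lemma Sg_Suc: "k \<ge> 1 \<Longrightarrow> Sg q (Suc j) (Suc k) = Sg q (Suc j) k + ww q k * Sg q j k"
  unfolding Sg_def
  apply (subst sum_subs_Suc, assumption)
  apply (simp add: sum_distrib_left)
  apply (rule sum.cong, simp)
  apply (subst prod.insert)
    apply (auto simp: subs_def finite_subset[of _ "{1..<k}"])
  done

lemma Ag_Suc: "k \<ge> 1 \<Longrightarrow> Ag q (Suc j) (Suc k) = Ag q (Suc j) k + ww q k * q ^ k * Sg q j k"
  unfolding Ag_def Sg_def
  apply (subst sum_subs_Suc, assumption)
  apply (simp add: sum_distrib_left)
  apply (rule sum.cong, simp)
  subgoal for L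
  proof -
    assume L: "L \<in> subs j k"
    have f: "finite L" "k \<notin> L" using L by (auto simp: subs_def finite_subset[of _ "{1..<k}"])
    have "Max (insert k L) = k"
      using L f by (auto simp: subs_def intro!: Max_eqI)
    then show ?thesis using f by (simp add: prod.insert mult_ac)
  qed
  done

lemma phi_eq: "phi q r k = Ag q (r - 1) k - q ^ k * Sg q (r - 1) k"
  unfolding phi_def Ag_def Sg_def subs_def[symmetric]
  by (simp add: sum_subtractf sum_distrib_left right_diff_distrib mult_ac ww_def)

lemma ww_rel:
  assumes "0 < q" "q < 1" "k \<ge> 1"
  shows "ww q k * (1 - q ^ k) = q ^ k"
proof -
  have "q ^ k < 1" using assms by (simp add: power_less_one_iff)
  moreover have "q ^ k > 0" using assms by simp
  ultimately show ?thesis using assms unfolding ww_def by (simp add: power_one_over field_simps)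
qed

lemma Bid:
  assumes q: "0 < q" "q < 1" and "k \<ge> 1"
  shows "(1 - q) * (Sg q (Suc j) k - Ag q (Suc j) k) + q ^ k * Sg q j k = q * Ag q j k"
  using assms(3)
proof (induction k arbitrary: j rule: dec_induct)
  case base
  then show ?case by (cases j) (simp_all add: Sg1 Ag1)
next
  case (step k)
  have w: "ww q k * (1 - q ^ k) = q ^ k" using ww_rel[OF q step(1)] .
  show ?case
  proof (cases j)
    case 0
    have IH: "(1 - q) * (Sg q 1 k - Ag q 1 k) + q ^ k = q" using step(3)[of 0] by simp
    have alg: "(1 - q) * (s + w - (a + w * x)) + q * x = q"
      if "w * (1 - x) = x" "(1 - q) * (s - a) + x = q" for s a w x :: real
    proof -
      have "(1 - q) * (s + w - (a + w * x)) + q * x - q = ((1 - q) * (s - a) + x - q) + (1-q) * (w * (1 - x) - x)"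
        by (simp add: algebra_simps)
      then show ?thesis using that by simp
    qed
    show ?thesis using alg[OF w IH] unfolding 0 Sg_Suc[OF step(1)] Ag_Suc[OF step(1)]
      by simp
  next
    case (Suc j')
    have IH: "(1 - q) * (Sg q (Suc j) k - Ag q (Suc j) k) + q ^ k * Sg q j k = q * Ag q j k"
      using step(3) .
    have alg: "(1 - q) * (s + w * sj - (a + w * x * sj)) + q * x * (sj + w * sj') = q * (aj + w * x * sj')"
      if "w * (1 - x) = x" "(1 - q) * (s - a) + x * sj = q * aj" for s a w x sj sj' aj :: real
    proof -
      have "(1 - q) * (s + w * sj - (a + w * x * sj)) + q * x * (sj + w * sj') - q * (aj + w * x * sj')
        = ((1 - q) * (s - a) + x * sj - q * aj) + (1 - q) * sj * (w * (1 - x) - x)"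
        by (simp add: algebra_simps)
      then show ?thesis using that by simp
    qed
    show ?thesis using alg[OF w IH] unfolding Suc Sg_Suc[OF step(1)] Ag_Suc[OF step(1)]
      by simp
  qed
qed

lemma key:
  assumes q: "0 < q" "q < 1" and k: "k \<ge> 1"
  shows "phi q (Suc (Suc j)) (Suc k) * (1 - q ^ k) - phi q (Suc (Suc j)) k * (1 - q ^ Suc k)
         = q ^ Suc k * phi q (Suc j) k"
proof -
  have w: "ww q k * (1 - q ^ k) = q ^ k" using ww_rel[OF q k] .
  have B: "(1 - q) * (Sg q (Suc j) k - Ag q (Suc j) k) + q ^ k * Sg q j k = q * Ag q j k"
    using Bid[OF q k] .
  have alg: "(a + w * x * s0 - q * x * (s + w * s0)) * (1 - x) - (a - x * s) * (1 - q * x)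
      = q * x * (a0 - x * s0)"
    if "w * (1 - x) = x" "(1 - q) * (s - a) + x * s0 = q * a0" for a s s0 a0 w x :: real
  proof -
    have "(a + w * x * s0 - q * x * (s + w * s0)) * (1 - x) - (a - x * s) * (1 - q * x)
      - q * x * (a0 - x * s0) = x * (((1-q) * (s-a) + x * s0) - q * a0) + x * s0 * (1-q) * (w * (1-x) - x)"
      by (simp add: algebra_simps)
    then show ?thesis using that by simp
  qed
  show ?thesis unfolding phi_eq using alg[OF w B]
    by (simp add: Sg_Suc[OF k] Ag_Suc[OF k])
qed

fun Dq :: "real \<Rightarrow> nat \<Rightarrow> nat \<Rightarrow> real" where
  "Dq q 0 k = (if k = 0 then 1 else 0)"
| "Dq q (Suc r) 0 = 0"
| "Dq q (Suc r) (Suc k) = - Dq q (Suc r) k + (1 - q) * q ^ k * Dq q r k / (1 - q ^ Suc k)"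

definition psi :: "real \<Rightarrow> nat \<Rightarrow> nat \<Rightarrow> real" where
  "psi q r k = (-1) ^ (r + k) * ((1 - q) / q) ^ (r - 1) * phi q r k / (1 - q ^ k)"

lemma phi1: "phi q (Suc 0) k = 1 - q ^ k" by (simp add: phi_eq)

lemma phi_Suc_1: "phi q (Suc r) (Suc 0) = (if r = 0 then 1 - q else 0)"
  by (simp add: phi_eq Sg1 Ag1)

lemma D_psi:
  assumes q: "0 < q" "q < 1" and k: "k \<ge> 1" and r: "r \<ge> 1"
  shows "Dq q r k = psi q r k"
  using k r
proof (induction k arbitrary: r rule: dec_induct)
  case base
  then obtain r' where r': "r = Suc r'" by (cases r) auto
  show ?case using q unfolding r' psi_def by (cases r') (simp_all add: phi_Suc_1)
next
  case (step k)
  then obtain r' where r': "r = Suc r'" by (cases r) auto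
  have qk: "q ^ k < 1" "q ^ Suc k < 1" using q step(1) by (simp_all only: power_less_one_iff) auto
  show ?case
  proof (cases r')
    case 0
    have "Dq q 1 k = psi q 1 k" using step by simp
    moreover have "Dq q 0 k = 0" using step(1) by simp
    ultimately show ?thesis using qk unfolding r' 0 psi_def by (simp add: phi1)
  next
    case (Suc m)
    have IH1: "Dq q (Suc (Suc m)) k = psi q (Suc (Suc m)) k" using step(3)[of "Suc (Suc m)"] by simp
    have IH2: "Dq q (Suc m) k = psi q (Suc m) k" using step(3)[of "Suc m"] by simp
    have K: "phi q (Suc (Suc m)) (Suc k) * (1 - q ^ k) - phi q (Suc (Suc m)) k * (1 - q ^ Suc k)
         = q ^ Suc k * phi q (Suc m) k" using key[OF q step(1)] .
    define c where "c = (1 - q) / q"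
    define s where "s = (-1::real) ^ (m + k)"
    have cq: "c * q = 1 - q" using q unfolding c_def by simp
    have s1: "(-1::real) ^ (Suc (Suc m) + Suc k) = - s" "(-1::real) ^ (Suc (Suc m) + k) = s"
      "(-1::real) ^ (Suc m + k) = - s" unfolding s_def by simp_all
    have "psi q (Suc (Suc m)) (Suc k) = - psi q (Suc (Suc m)) k
        + (1 - q) * q ^ k * psi q (Suc m) k / (1 - q ^ Suc k)"
    proof -
      define P where "P = s * c ^ Suc m"
      define X where "X = phi q (Suc (Suc m)) (Suc k)"
      define Y where "Y = phi q (Suc (Suc m)) k"
      define Z where "Z = phi q (Suc m) k"
      define a where "a = 1 - q ^ k"
      define b where "b = 1 - q ^ Suc k"
      define u where "u = (1 - q) * q ^ k"
      define V where "V = s * c ^ m * Z"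
      have ab: "a \<noteq> 0" "b \<noteq> 0" using qk unfolding a_def b_def by auto
      have A: "psi q (Suc (Suc m)) (Suc k) = - (P * X / b)"
        unfolding psi_def s1 c_def P_def X_def b_def by simp
      have B: "psi q (Suc (Suc m)) k = P * Y / a"
        unfolding psi_def s1 c_def P_def Y_def a_def by simp
      have C: "psi q (Suc m) k = - (V / a)"
        unfolding psi_def s1 c_def V_def Z_def a_def by simp
      have H: "P * (X * a - Y * b) = u * V"
        unfolding P_def X_def Y_def a_def b_def K u_def V_def Z_def using cq
        by (simp add: algebra_simps flip: cq)
      have gen: "- (P * X / b) - (- (P * Y / a) + u * (- (V / a)) / b) = (u * V - P * (X * a - Y * b)) / (a * b)"
        using ab by (simp add: field_simps)
      have "- (P * X / b) = - (P * Y / a) + u * (- (V / a)) / b"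
        using gen H by simp
      then show ?thesis unfolding A B C b_def[symmetric] u_def[symmetric] .
    qed
    then show ?thesis unfolding r' Suc using IH1 IH2 by simp
  qed
qed


lemma ltr_finite: "finite (ltr_max_pos n a)"
  unfolding ltr_max_pos_def by (rule finite_subset[of _ "{..<n}"]) auto

lemma det_key:
  assumes r: "r \<ge> 1"
  shows "(r \<le> card {i \<in> ltr_max_pos n a. t < a i}) \<longleftrightarrow>
         (r \<le> card (ltr_max_pos n a) \<and> t < rth_ltr_max_value r n a)"
proof -
  define S where "S = ltr_max_pos n a"
  define xs where "xs = sorted_list_of_set S"
  define N where "N = length xs"
  define T where "T = {i \<in> S. t < a i}"
  have fS: "finite S" unfolding S_def by (rule ltr_finite)
  have setxs: "set xs = S" unfolding xs_def using fS by simp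
  have dist: "distinct xs" unfolding xs_def by simp
  have ss: "sorted_wrt (<) xs" unfolding xs_def by (simp add: strict_sorted_list_of_set)
  have cardS: "card S = N" unfolding N_def xs_def using fS by simp
  have inS: "k < N \<Longrightarrow> xs ! k \<in> S" for k using setxs N_def by auto
  have mono: "a (xs ! k) \<le> a (xs ! l)" if "k \<le> l" "l < N" for k l
  proof (cases "k = l")
    case False
    then have kl: "k < l" using that by simp
    have "xs ! k < xs ! l" using sorted_wrt_nth_less[OF ss kl] that N_def by simp
    moreover have "xs ! l \<in> S" using inS that by simp
    ultimately show ?thesis unfolding S_def ltr_max_pos_def by auto
  qed simp
  have rv: "rth_ltr_max_value r n a = a (xs ! (N - r))" if "r \<le> N"
    unfolding rth_ltr_max_value_def S_def[symmetric] xs_def[symmetric]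
    using that r N_def by (simp add: rev_nth)
  have fT: "finite T" unfolding T_def using fS by simp
  have TS: "T \<subseteq> S" unfolding T_def by auto
  have "(r \<le> card T) \<longleftrightarrow> (r \<le> N \<and> t < a (xs ! (N - r)))"
  proof
    assume rT: "r \<le> card T"
    have rN: "r \<le> N" using card_mono[OF fS TS] rT cardS by simp
    show "r \<le> N \<and> t < a (xs ! (N - r))"
    proof (rule ccontr)
      assume "\<not> ?thesis"
      then have le: "a (xs ! (N - r)) \<le> t" using rN by simp
      have "T \<subseteq> nth xs ` {Suc (N - r)..<N}"
      proof
        fix i assume iT: "i \<in> T"
        then have "i \<in> set xs" using setxs TS by auto
        then obtain k where k: "k < N" "i = xs ! k" by (auto simp: in_set_conv_nth N_def)
        have "\<not> k \<le> N - r"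
        proof
          assume "k \<le> N - r"
          then have "a i \<le> t" using mono[of k "N - r"] le k rN r by simp
          then show False using iT unfolding T_def by simp
        qed
        then show "i \<in> nth xs ` {Suc (N - r)..<N}" using k by auto
      qed
      then have "card T \<le> card (nth xs ` {Suc (N - r)..<N})" by (intro card_mono) auto
      also have "\<dots> \<le> card {Suc (N - r)..<N}" by (rule card_image_le) simp
      also have "\<dots> < r" using rN r by simp
      finally show False using rT by simp
    qed
  next
    assume H: "r \<le> N \<and> t < a (xs ! (N - r))"
    have sub: "nth xs ` {N - r..<N} \<subseteq> T"
    proof
      fix i assume "i \<in> nth xs ` {N - r..<N}"
      then obtain k where k: "N - r \<le> k" "k < N" "i = xs ! k" by auto
      have "t < a i" using mono[of "N - r" k] k H by simp
      then show "i \<in> T" unfolding T_def using inS k by simp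
    qed
    have "card (nth xs ` {N - r..<N}) = r"
      using H by (subst card_image) (auto intro!: inj_on_nth dist simp: N_def)
    then show "r \<le> card T" using card_mono[OF fT sub] by simp
  qed
  then show ?thesis unfolding T_def[symmetric] S_def[symmetric] cardS using rv by auto
qed


definition W :: "real \<Rightarrow> nat \<Rightarrow> nat \<Rightarrow> (nat \<Rightarrow> nat) pmf" where
  "W q m n = Pi_pmf {m..<n} 0 (\<lambda>_. letter_pmf q)"

definition G :: "nat \<Rightarrow> nat \<Rightarrow> (nat \<Rightarrow> nat) \<Rightarrow> nat \<Rightarrow> nat" where
  "G m n a t = card {i. m \<le> i \<and> i < n \<and> (\<forall>j. m \<le> j \<and> j < i \<longrightarrow> a j < a i) \<and> t < a i}"

definition H :: "real \<Rightarrow> nat \<Rightarrow> nat \<Rightarrow> nat \<Rightarrow> nat \<Rightarrow> real" where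
  "H q r m n t = measure_pmf.prob (W q m n) {a. r \<le> G m n a t}"

lemma G_upd:
  assumes "m < n"
  shows "G m n (f(m := y)) t = (if y \<le> t then G (Suc m) n f t else Suc (G (Suc m) n f y))"
proof -
  define S where "S u = {i. Suc m \<le> i \<and> i < n \<and> (\<forall>j. Suc m \<le> j \<and> j < i \<longrightarrow> f j < f i) \<and> u < f i}" for u
  have fin: "finite (S u)" for u unfolding S_def by (rule finite_subset[of _ "{..<n}"]) auto
  have split: "(\<forall>j. m \<le> j \<and> j < i \<longrightarrow> P j) \<longleftrightarrow> P m \<and> (\<forall>j. Suc m \<le> j \<and> j < i \<longrightarrow> P j)"
    if "m < i" for i and P :: "nat \<Rightarrow> bool"
    using that by (metis Suc_leD le_antisym not_less_eq_eq)
  have eq: "{i. m \<le> i \<and> i < n \<and> (\<forall>j. m \<le> j \<and> j < i \<longrightarrow> (f(m := y)) j < (f(m := y)) i) \<and> t < (f(m := y)) i}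
      = (if y \<le> t then S t else insert m (S y))"
  proof (intro set_eqI)
    fix i
    show "i \<in> {i. m \<le> i \<and> i < n \<and> (\<forall>j. m \<le> j \<and> j < i \<longrightarrow> (f(m := y)) j < (f(m := y)) i) \<and> t < (f(m := y)) i}
      \<longleftrightarrow> i \<in> (if y \<le> t then S t else insert m (S y))"
    proof (cases "m < i")
      case True
      have a: "(\<forall>j. m \<le> j \<and> j < i \<longrightarrow> (f(m := y)) j < (f(m := y)) i) \<longleftrightarrow>
            y < f i \<and> (\<forall>j. Suc m \<le> j \<and> j < i \<longrightarrow> f j < f i)"
        using split[OF True, of "\<lambda>j. (f(m := y)) j < (f(m := y)) i"] True by auto
      show ?thesis using True unfolding a S_def by auto
    next
      case False
      then show ?thesis unfolding S_def using assms by auto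
    qed
  qed
  have "m \<notin> S y" unfolding S_def by auto
  then show ?thesis unfolding G_def eq using fin unfolding S_def by simp
qed

lemma W_insert:
  assumes "m < n"
  shows "W q m n = map_pmf (\<lambda>(y, f). f(m := y)) (pair_pmf (letter_pmf q) (W q (Suc m) n))"
proof -
  have "{m..<n} = insert m {Suc m..<n}" using assms by auto
  then show ?thesis unfolding W_def by (simp add: Pi_pmf_insert)
qed

lemma prob_pair:
  "measure_pmf.prob (pair_pmf A B) S = measure_pmf.expectation A (\<lambda>x. measure_pmf.prob B {y. (x, y) \<in> S})"
proof -
  have "ennreal (measure_pmf.prob (pair_pmf A B) S) = emeasure (pair_pmf A B) S"
    by (simp add: measure_pmf.emeasure_eq_measure)
  also have "\<dots> = (\<integral>\<^sup>+z. indicator S z \<partial>pair_pmf A B)" by simp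
  also have "\<dots> = (\<integral>\<^sup>+x. \<integral>\<^sup>+y. indicator S (x, y) \<partial>B \<partial>A)"
    by (rule nn_integral_pair_pmf')
  also have "\<dots> = (\<integral>\<^sup>+x. ennreal (measure_pmf.prob B {y. (x, y) \<in> S}) \<partial>A)"
  proof (intro nn_integral_cong)
    fix x
    have "indicator S (x, y) = (indicator {y. (x, y) \<in> S} y :: ennreal)" for y
      by (simp add: indicator_def)
    then have "(\<integral>\<^sup>+y. indicator S (x, y) \<partial>B) = (\<integral>\<^sup>+y. indicator {y. (x, y) \<in> S} y \<partial>B)"
      by simp
    also have "\<dots> = emeasure B {y. (x, y) \<in> S}" by (rule nn_integral_indicator) simp
    finally show "(\<integral>\<^sup>+y. indicator S (x, y) \<partial>B) = ennreal (measure_pmf.prob B {y. (x, y) \<in> S})"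
      by (simp add: measure_pmf.emeasure_eq_measure)
  qed
  also have "\<dots> = ennreal (measure_pmf.expectation A (\<lambda>x. measure_pmf.prob B {y. (x, y) \<in> S}))"
    by (rule nn_integral_eq_integral) (auto intro!: measure_pmf.integrable_const_bound[where B=1])
  finally show ?thesis by (simp add: ennreal_inj integral_nonneg_AE)
qed

lemma H_rec:
  assumes "m < n"
  shows "H q (Suc r) m n t = measure_pmf.expectation (letter_pmf q)
           (\<lambda>y. if y \<le> t then H q (Suc r) (Suc m) n t else H q r (Suc m) n y)"
proof -
  have "H q (Suc r) m n t = measure_pmf.expectation (letter_pmf q)
      (\<lambda>y. measure_pmf.prob (W q (Suc m) n) {f. Suc r \<le> G m n (f(m := y)) t})"
    unfolding H_def W_insert[OF assms] by (simp add: prob_pair case_prod_unfold)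
  also have "\<dots> = measure_pmf.expectation (letter_pmf q)
           (\<lambda>y. if y \<le> t then H q (Suc r) (Suc m) n t else H q r (Suc m) n y)"
    unfolding H_def G_upd[OF assms] by (intro Bochner_Integration.integral_cong) auto
  finally show ?thesis .
qed

lemma letter_sums:
  assumes q: "0 < q" "q < 1" and B: "\<And>j. \<bar>f j\<bar> \<le> B"
  shows "(\<lambda>i. (1 - q) * q ^ i * f (Suc i)) sums measure_pmf.expectation (letter_pmf q) f"
proof -
  have e: "measure_pmf.expectation (letter_pmf q) f =
      measure_pmf.expectation (geometric_pmf (1 - q)) (\<lambda>n. f (Suc n))"
    by (simp add: letter_pmf_def)
  have pm: "pmf (geometric_pmf (1 - q)) n = (1 - q) * q ^ n" for n
    using q by simp
  have "measure_pmf.expectation (geometric_pmf (1 - q)) (\<lambda>n. f (Suc n)) =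
        (\<integral>n. pmf (geometric_pmf (1 - q)) n * f (Suc n) \<partial>count_space UNIV)"
    unfolding measure_pmf_eq_density by (subst integral_density) auto
  also have "\<dots> = (\<integral>n. (1 - q) * q ^ n * f (Suc n) \<partial>count_space UNIV)"
    unfolding pm ..
  finally have e2: "measure_pmf.expectation (letter_pmf q) f =
      (\<integral>n. (1 - q) * q ^ n * f (Suc n) \<partial>count_space UNIV)" using e by simp
  have sg: "summable (\<lambda>n. B * (1 - q) * q ^ n)"
    using q by (intro summable_mult summable_geometric) auto
  have "summable (\<lambda>n. norm ((1 - q) * q ^ n * f (Suc n)))"
  proof (rule summable_comparison_test[OF _ sg])
    show "\<exists>N. \<forall>n\<ge>N. norm (norm ((1 - q) * q ^ n * f (Suc n))) \<le> B * (1 - q) * q ^ n"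
    proof (intro exI allI impI)
      fix n
      have "\<bar>f (Suc n)\<bar> * ((1 - q) * q ^ n) \<le> B * ((1 - q) * q ^ n)"
        using B q by (intro mult_right_mono) auto
      then show "norm (norm ((1 - q) * q ^ n * f (Suc n))) \<le> B * (1 - q) * q ^ n"
        using q by (simp add: abs_mult mult_ac)
    qed
  qed
  then have "integrable (count_space UNIV) (\<lambda>n. (1 - q) * q ^ n * f (Suc n))"
    by (simp add: integrable_count_space_nat_iff)
  from sums_integral_count_space_nat[OF this] show ?thesis unfolding e2 .
qed

lemma binom_step:
  fixes x :: real
  shows "(\<Sum>k\<le>Suc d. real (Suc d choose k) * x ^ k * E k) =
     (\<Sum>k\<le>d. real (d choose k) * x ^ k * E k) + (\<Sum>k\<le>d. real (d choose k) * x ^ Suc k * E (Suc k))"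
proof -
  have "(\<Sum>k\<le>Suc d. real (Suc d choose k) * x ^ k * E k) =
      E 0 + (\<Sum>k\<le>d. real (Suc d choose Suc k) * x ^ Suc k * E (Suc k))"
    by (subst sum.atMost_Suc_shift) simp
  also have "\<dots> = E 0 + (\<Sum>k\<le>d. real (d choose Suc k) * x ^ Suc k * E (Suc k))
      + (\<Sum>k\<le>d. real (d choose k) * x ^ Suc k * E (Suc k))"
    by (simp add: sum.distrib algebra_simps)
  also have "E 0 + (\<Sum>k\<le>d. real (d choose Suc k) * x ^ Suc k * E (Suc k)) =
      (\<Sum>k\<le>Suc d. real (d choose k) * x ^ k * E k)"
    by (subst sum.atMost_Suc_shift) simp
  also have "\<dots> = (\<Sum>k\<le>d. real (d choose k) * x ^ k * E k)"
    by simp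
  finally show ?thesis .
qed

lemma W_empty: "W q m m = return_pmf (\<lambda>_. 0)"
  unfolding W_def by simp

lemma G_empty: "G m m a t = 0"
  unfolding G_def by simp

lemma qpow_lt1: "0 < q \<Longrightarrow> q < 1 \<Longrightarrow> k \<ge> 1 \<Longrightarrow> q ^ k < (1::real)"
  by (simp add: power_less_one_iff)

lemma H_formula:
  assumes q: "0 < q" "q < 1"
  shows "H q r m (m + d) t = (\<Sum>k\<le>d. real (d choose k) * (q ^ t) ^ k * Dq q r k)"
proof (induction d arbitrary: m r t)
  case 0
  show ?case
    unfolding H_def by (cases r) (simp_all add: W_empty G_empty)
next
  case (Suc d)
  show ?case
  proof (cases r)
    case 0
    have "H q r m (m + Suc d) t = 1" unfolding H_def 0 by simp
    moreover have "(\<Sum>k\<le>Suc d. real (Suc d choose k) * (q ^ t) ^ k * Dq q r k) = 1"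
      unfolding 0 by (subst sum.atMost_Suc_shift) simp
    ultimately show ?thesis by simp
  next
    case (Suc r')
    define x where "x = q ^ t"
    define c where "c = (\<Sum>k\<le>d. real (d choose k) * x ^ k * Dq q (Suc r') k)"
    define h where "h y = (\<Sum>k\<le>d. real (d choose k) * (q ^ y) ^ k * Dq q r' k)" for y
    define f where "f y = (if y \<le> t then c else h y)" for y
    define BB where "BB = \<bar>c\<bar> + (\<Sum>k\<le>d. real (d choose k) * \<bar>Dq q r' k\<bar>)"
    have "H q r m (m + Suc d) t = measure_pmf.expectation (letter_pmf q)
           (\<lambda>y. if y \<le> t then H q (Suc r') (Suc m) (m + Suc d) t else H q r' (Suc m) (m + Suc d) y)"
      unfolding Suc by (rule H_rec) simp
    also have "(\<lambda>y. if y \<le> t then H q (Suc r') (Suc m) (m + Suc d) t else H q r' (Suc m) (m + Suc d) y) = f"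
      using Suc.IH[where m="Suc m"] unfolding f_def h_def c_def x_def by (auto simp: fun_eq_iff)
    finally have Heq: "H q r m (m + Suc d) t = measure_pmf.expectation (letter_pmf q) f" .
    have hb: "\<bar>h y\<bar> \<le> (\<Sum>k\<le>d. real (d choose k) * \<bar>Dq q r' k\<bar>)" for y
    proof -
      have "\<bar>h y\<bar> \<le> (\<Sum>k\<le>d. \<bar>real (d choose k) * (q ^ y) ^ k * Dq q r' k\<bar>)"
        unfolding h_def by (rule sum_abs)
      also have "\<dots> \<le> (\<Sum>k\<le>d. real (d choose k) * \<bar>Dq q r' k\<bar>)"
      proof (intro sum_mono)
        fix k
        have "(q ^ y) ^ k \<le> 1" using q by (intro power_le_one) auto
        then have "real (d choose k) * (q ^ y) ^ k * \<bar>Dq q r' k\<bar> \<le> real (d choose k) * 1 * \<bar>Dq q r' k\<bar>"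
          by (intro mult_right_mono mult_left_mono) auto
        then show "\<bar>real (d choose k) * (q ^ y) ^ k * Dq q r' k\<bar> \<le> real (d choose k) * \<bar>Dq q r' k\<bar>"
          using q by (simp add: abs_mult)
      qed
      finally show ?thesis .
    qed
    have fb: "\<bar>f y\<bar> \<le> BB" for y
      unfolding f_def BB_def using hb[of y] by (auto intro: add_increasing)
    have S1: "(\<lambda>i. (1 - q) * q ^ i * f (Suc i)) sums measure_pmf.expectation (letter_pmf q) f"
      by (rule letter_sums[OF q fb])
    define g where "g i = (1 - q) * q ^ i * f (Suc i)" for i
    define coef where "coef k = real (d choose k) * Dq q r' k * (1 - q) * x * (q ^ Suc t) ^ k" for k
    have gshift: "g (i + t) = (\<Sum>k\<le>d. coef k * (q ^ Suc k) ^ i)" for i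
    proof -
      have "g (i + t) = (1 - q) * q ^ (i + t) * h (Suc (i + t))"
        unfolding g_def f_def by simp
      also have "\<dots> = (\<Sum>k\<le>d. coef k * (q ^ Suc k) ^ i)"
        unfolding h_def sum_distrib_left
      proof (intro sum.cong refl)
        fix k
        have "(q ^ Suc (i + t)) ^ k = (q ^ Suc t) ^ k * (q ^ k) ^ i"
          by (simp add: power_add power_mult_distrib power_mult[symmetric] mult.commute)
        moreover have "q ^ (i + t) = q ^ t * q ^ i" by (simp add: power_add)
        moreover have "(q ^ Suc k) ^ i = q ^ i * (q ^ k) ^ i" by (simp add: power_mult_distrib)
        ultimately show "(1 - q) * q ^ (i + t) * (real (d choose k) * (q ^ Suc (i + t)) ^ k * Dq q r' k) =
             coef k * (q ^ Suc k) ^ i"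
          unfolding coef_def x_def by (simp add: mult_ac)
      qed
      finally show ?thesis .
    qed
    have "(\<lambda>i. g (i + t)) sums (\<Sum>k\<le>d. coef k / (1 - q ^ Suc k))"
      unfolding gshift
    proof (rule sums_sum)
      fix k
      have "norm (q ^ Suc k) < 1" using q qpow_lt1[OF q, of "Suc k"] by simp
      from sums_mult[OF geometric_sums[OF this], of "coef k"]
      show "(\<lambda>i. coef k * (q ^ Suc k) ^ i) sums (coef k / (1 - q ^ Suc k))"
        by (simp add: divide_inverse)
    qed
    then have S2: "g sums ((\<Sum>k\<le>d. coef k / (1 - q ^ Suc k)) + (\<Sum>i<t. g i))"
      by (simp add: sums_iff_shift)
    have gsmall: "(\<Sum>i<t. g i) = c * (1 - x)"
    proof -
      have "(\<Sum>i<t. g i) = (\<Sum>i<t. (1 - q) * c * q ^ i)"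
        unfolding g_def f_def by (intro sum.cong) auto
      also have "\<dots> = (1 - q) * c * (\<Sum>i<t. q ^ i)" by (simp add: sum_distrib_left)
      also have "\<dots> = c * (1 - x)" unfolding x_def using q by (simp add: sum_gp_strict)
      finally show ?thesis .
    qed
    have expeq: "measure_pmf.expectation (letter_pmf q) f = (\<Sum>k\<le>d. coef k / (1 - q ^ Suc k)) + c * (1 - x)"
    proof -
      have "g = (\<lambda>i. (1 - q) * q ^ i * f (Suc i))" by (simp add: g_def fun_eq_iff)
      then have "g sums measure_pmf.expectation (letter_pmf q) f" using S1 by simp
      then show ?thesis using sums_unique2[OF _ S2[unfolded gsmall]] by blast
    qed
    have "(\<Sum>k\<le>Suc d. real (Suc d choose k) * x ^ k * Dq q (Suc r') k)
       = c + (\<Sum>k\<le>d. real (d choose k) * x ^ Suc k * Dq q (Suc r') (Suc k))"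
      unfolding c_def by (rule binom_step)
    also have "(\<Sum>k\<le>d. real (d choose k) * x ^ Suc k * Dq q (Suc r') (Suc k))
       = (\<Sum>k\<le>d. coef k / (1 - q ^ Suc k)) - x * c"
    proof -
      have "(\<Sum>k\<le>d. real (d choose k) * x ^ Suc k * Dq q (Suc r') (Suc k))
          = (\<Sum>k\<le>d. coef k / (1 - q ^ Suc k) - x * (real (d choose k) * x ^ k * Dq q (Suc r') k))"
      proof (intro sum.cong refl)
        fix k
        have "(q ^ Suc t) ^ k = x ^ k * q ^ k" unfolding x_def
          by (simp add: power_mult_distrib)
        then show "real (d choose k) * x ^ Suc k * Dq q (Suc r') (Suc k) =
          coef k / (1 - q ^ Suc k) - x * (real (d choose k) * x ^ k * Dq q (Suc r') k)"
          unfolding coef_def by (simp add: field_simps x_def)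
      qed
      also have "\<dots> = (\<Sum>k\<le>d. coef k / (1 - q ^ Suc k)) - x * c"
        unfolding c_def by (simp add: sum_subtractf sum_distrib_left)
      finally show ?thesis .
    qed
    finally have "(\<Sum>k\<le>Suc d. real (Suc d choose k) * x ^ k * Dq q (Suc r') k)
        = (\<Sum>k\<le>d. coef k / (1 - q ^ Suc k)) + c * (1 - x)" by (simp add: algebra_simps)
    then show ?thesis using Heq expeq unfolding Suc x_def[symmetric] by linarith
  qed
qed

lemma G0_eq: "G 0 n a t = card {i \<in> ltr_max_pos n a. t < a i}"
  unfolding G_def ltr_max_pos_def by (rule arg_cong[where f=card]) auto

lemma Dq_r0: "r \<ge> 1 \<Longrightarrow> Dq q r 0 = 0"
  by (cases r) auto

lemma E_formula:
  assumes q: "0 < q" "q < 1" and r: "r \<ge> 1"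
  shows "E_rn q r n = (\<Sum>k\<le>n. if k = 0 then 0 else real (n choose k) * Dq q r k / (1 - q ^ k))"
proof -
  define V where "V = (\<Sum>k\<le>n. if k = 0 then 0 else real (n choose k) * Dq q r k / (1 - q ^ k))"
  define F where "F a = (if r \<le> card (ltr_max_pos n a) then real (rth_ltr_max_value r n a) else 0)" for a
  define A where "A t = {a. r \<le> G 0 n a t}" for t
  have wp: "word_pmf q n = W q 0 n" unfolding word_pmf_def W_def by (simp add: atLeast0LessThan)
  have ev: "a \<in> A t \<longleftrightarrow> (r \<le> card (ltr_max_pos n a) \<and> t < rth_ltr_max_value r n a)" for a t
    unfolding A_def using det_key[OF r, of n a t] G0_eq by simp
  have Fsum: "ennreal (F a) = (\<Sum>t. indicator (A t) a)" for a
  proof (cases "r \<le> card (ltr_max_pos n a)")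
    case True
    have "(\<Sum>t. indicator (A t) a :: ennreal) = (\<Sum>t<rth_ltr_max_value r n a. indicator (A t) a)"
      by (rule suminf_finite) (auto simp: ev)
    also have "\<dots> = (\<Sum>t<rth_ltr_max_value r n a. 1)"
      by (intro sum.cong) (auto simp: ev True)
    finally show ?thesis unfolding F_def using True by (simp add: ennreal_of_nat_eq_real_of_nat)
  next
    case False
    then show ?thesis unfolding F_def by (simp add: ev)
  qed
  have Hs: "(\<lambda>t. H q r 0 n t) sums V"
  proof -
    have "H q r 0 n t = (\<Sum>k\<le>n. real (n choose k) * (q ^ t) ^ k * Dq q r k)" for t
      using H_formula[OF q, of r 0 n t] by simp
    moreover have "(\<lambda>t. (\<Sum>k\<le>n. real (n choose k) * (q ^ t) ^ k * Dq q r k)) sums V"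
      unfolding V_def
    proof (rule sums_sum)
      fix k
      show "(\<lambda>t. real (n choose k) * (q ^ t) ^ k * Dq q r k) sums
          (if k = 0 then 0 else real (n choose k) * Dq q r k / (1 - q ^ k))"
      proof (cases "k = 0")
        case True
        then show ?thesis using Dq_r0[OF r] by simp
      next
        case False
        have "norm (q ^ k) < 1" using qpow_lt1[OF q, of k] q False by simp
        from sums_mult[OF geometric_sums[OF this], of "real (n choose k) * Dq q r k"]
        have "(\<lambda>t. real (n choose k) * Dq q r k * (q ^ k) ^ t) sums (real (n choose k) * Dq q r k / (1 - q ^ k))"
          by (simp add: divide_inverse)
        moreover have "(q ^ t) ^ k = (q ^ k) ^ t" for t by (simp add: power_mult[symmetric] mult.commute)
        ultimately show ?thesis using False by (simp add: mult_ac)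
      qed
    qed
    ultimately show ?thesis by simp
  qed
  have Hnn: "0 \<le> H q r 0 n t" for t unfolding H_def by simp
  have V0: "0 \<le> V" using sums_le[OF _ sums_zero Hs] Hnn by auto
  have "(\<integral>\<^sup>+a. ennreal (F a) \<partial>W q 0 n) = (\<integral>\<^sup>+a. (\<Sum>t. indicator (A t) a) \<partial>W q 0 n)"
    using Fsum by simp
  also have "\<dots> = (\<Sum>t. \<integral>\<^sup>+a. indicator (A t) a \<partial>W q 0 n)"
    by (rule nn_integral_suminf) simp
  also have "\<dots> = (\<Sum>t. ennreal (H q r 0 n t))"
    unfolding H_def A_def by (simp add: measure_pmf.emeasure_eq_measure)
  also have "\<dots> = ennreal V"
    using suminf_ennreal2[OF Hnn sums_summable[OF Hs]] sums_unique[OF Hs] by simp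
  finally have nn: "(\<integral>\<^sup>+a. ennreal (F a) \<partial>W q 0 n) = ennreal V" .
  have "has_bochner_integral (W q 0 n) F V"
    by (rule has_bochner_integral_nn_integral[OF _ _ V0 nn]) (auto simp: F_def)
  then have "measure_pmf.expectation (W q 0 n) F = V" by (rule has_bochner_integral_integral_eq)
  then show ?thesis unfolding E_rn_def wp F_def V_def by simp
qed


lemma phi_zero:
  assumes "1 \<le> k" "k < r"
  shows "phi q r k = 0"
proof -
  have "{L. L \<subseteq> {1..<k} \<and> card L = r - 1} = {}"
  proof (rule ccontr)
    assume "\<not> ?thesis"
    then obtain L where L: "L \<subseteq> {1..<k}" "card L = r - 1" by auto
    have "card L \<le> card {1..<k}" using L by (intro card_mono) auto
    then show False using L assms by simp
  qed
  then show ?thesis unfolding phi_def by (simp only: sum.empty)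
qed

theorem mainTheorem2:
  fixes q :: real
  assumes "0 < q" and "q < 1"
  shows "(\<forall>r n. 1 \<le> r \<longrightarrow> r \<le> n \<longrightarrow>
           E_rn q r n = (-1) ^ r * ((1 - q) / q) ^ (r - 1) *
             (\<Sum>k=r..n. real (n choose k) * (-1) ^ k * phi q r k / (1 - q ^ k)\<^sup>2))
       \<and> (\<forall>n. 1 \<le> n \<longrightarrow>
           E_rn q 1 n = (\<Sum>k=1..n. real (n choose k) * (-1) ^ (k - 1) * (1 / (1 - q ^ k))))"
proof -
  have q: "0 < q" "q < 1" using assms by auto
  have P1: "E_rn q r n = (-1) ^ r * ((1 - q) / q) ^ (r - 1) *
             (\<Sum>k=r..n. real (n choose k) * (-1) ^ k * phi q r k / (1 - q ^ k)\<^sup>2)"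
    if r: "1 \<le> r" "r \<le> n" for r n
  proof -
    define T where "T k = (if k = 0 then 0 else real (n choose k) * Dq q r k / (1 - q ^ k))" for k
    have "E_rn q r n = (\<Sum>k\<le>n. T k)" unfolding T_def by (rule E_formula[OF q r(1)])
    also have "\<dots> = (\<Sum>k=r..n. T k)"
    proof -
      have Tz: "T i = 0" if "i < r" for i
      proof (cases "i = 0")
        case True
        then show ?thesis by (simp add: T_def)
      next
        case False
        then have i1: "i \<ge> 1" by simp
        have "Dq q r i = 0" unfolding D_psi[OF q i1 r(1)] psi_def phi_zero[OF i1 that] by simp
        then show ?thesis by (simp add: T_def)
      qed
      show ?thesis
      proof (rule sum.mono_neutral_right)
        show "\<forall>i\<in>{..n} - {r..n}. T i = 0"
        proof
          fix i assume "i \<in> {..n} - {r..n}"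
          then have "i < r" by auto
          then show "T i = 0" by (rule Tz)
        qed
      qed auto
    qed
    also have "\<dots> = (\<Sum>k=r..n. (-1) ^ r * ((1 - q) / q) ^ (r - 1) *
         (real (n choose k) * (-1) ^ k * phi q r k / (1 - q ^ k)\<^sup>2))"
    proof (intro sum.cong refl)
      fix k assume "k \<in> {r..n}"
      then have k: "k \<ge> 1" using r by auto
      define a where "a = 1 - q ^ k"
      define c where "c = ((1 - q) / q) ^ (r - 1)"
      define C where "C = real (n choose k)"
      define s where "s = (-1::real) ^ r"
      define t where "t = (-1::real) ^ k"
      define f where "f = phi q r k"
      have a: "a \<noteq> 0" using qpow_lt1[OF q k] unfolding a_def by simp
      have "Dq q r k = s * t * c * f / a"
        unfolding D_psi[OF q k r(1)] psi_def s_def t_def c_def f_def a_def power_add ..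
      then have "T k = C * (s * t * c * f / a) / a"
        using k unfolding T_def C_def a_def by simp
      also have "\<dots> = s * c * (C * t * f / a\<^sup>2)"
        using a by (simp add: power2_eq_square)
      finally show "T k = (-1) ^ r * ((1 - q) / q) ^ (r - 1) *
         (real (n choose k) * (-1) ^ k * phi q r k / (1 - q ^ k)\<^sup>2)"
        unfolding a_def c_def C_def s_def t_def f_def .
    qed
    also have "\<dots> = (-1) ^ r * ((1 - q) / q) ^ (r - 1) *
             (\<Sum>k=r..n. real (n choose k) * (-1) ^ k * phi q r k / (1 - q ^ k)\<^sup>2)"
      by (simp add: sum_distrib_left)
    finally show ?thesis .
  qed
  have P2: "E_rn q 1 n = (\<Sum>k=1..n. real (n choose k) * (-1) ^ (k - 1) * (1 / (1 - q ^ k)))"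
    if n: "1 \<le> n" for n
  proof -
    have "E_rn q 1 n = (-1) * (\<Sum>k=1..n. real (n choose k) * (-1) ^ k * phi q 1 k / (1 - q ^ k)\<^sup>2)"
    proof -
      have "E_rn q 1 n = (-1) ^ 1 * ((1 - q) / q) ^ (1 - 1) *
             (\<Sum>k=1..n. real (n choose k) * (-1) ^ k * phi q 1 k / (1 - q ^ k)\<^sup>2)"
        using n by (intro P1) auto
      then show ?thesis by (simp only: power_one_right diff_self_eq_0 power_0 mult_1_right)
    qed
    also have "\<dots> = (\<Sum>k=1..n. real (n choose k) * (-1) ^ (k - 1) * (1 / (1 - q ^ k)))"
      unfolding sum_distrib_left
    proof (intro sum.cong refl)
      fix k assume "k \<in> {1..n}"
      then have k: "k \<ge> 1" by auto
      have ne: "1 - q ^ k \<noteq> 0" using qpow_lt1[OF q k] by simp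
      have sg: "(-1::real) ^ k = - ((-1) ^ (k - 1))"
      proof -
        obtain j where "k = Suc j" using k by (cases k) auto
        then show ?thesis by simp
      qed
      show "-1 * (real (n choose k) * (-1) ^ k * phi q 1 k / (1 - q ^ k)\<^sup>2) =
          real (n choose k) * (-1) ^ (k - 1) * (1 / (1 - q ^ k))"
      proof -
        define a where "a = 1 - q ^ k"
        define u where "u = (-1::real) ^ (k - 1)"
        define C where "C = real (n choose k)"
        have ph: "phi q 1 k = a" unfolding a_def using phi1[of q k] by simp
        have a0: "a \<noteq> 0" using ne unfolding a_def .
        have "-1 * (C * (- u) * a / a\<^sup>2) = C * u * (1 / a)"
          using a0 by (simp add: power2_eq_square)
        then show ?thesis unfolding sg ph unfolding a_def u_def C_def .
      qed
    qed
    finally show ?thesis .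
  qed
  show ?thesis using P1 P2 by blast
qed

end
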